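(* Let $S=\langle P,\varphi\rangle$ be a SUT model, $t$ a strength, $N\ge1$ an integer and $lb$ an integer with $0\le lb<CAN(t,S)$. If $N\ge CAN(t,S)$, then the optimal cost of the Partial MaxSAT instance $PMSat_{CX}^{N,t,S,lb}$ (defined in the context) is $CAN(t,S)-(lb+1)$; otherwise (i.e. if $N<CAN(t,S)$) it is $\infty$.
   Context: A SUT model is $S=\langle P,\varphi\rangle$, where $P$ is a finite set of parameters, each $p\in P$ having a finite nonempty domain $d(p)$, and $\varphi$ is a propositional formula whose atoms have the form $(p=v)$ with $p\in P$, $v\in d(p)$. A test case is a full assignment $A$ giving each $p$ a value in $d(p)$ such that $\varphi$ is true when each atom $(p=v)$ is read as true iff $A(p)=v$; it is assumed that at least one test case exists. Fix a strength $t$ with $1\le t\le|P|$. A $t$-tuple is an assignment of values to exactly $t$ distinct parameters, viewed as a set of pairs $(p,v)$; a test case covers $\tau$ if it assigns $v$ to $p$ for every $(p,v)\in\tau$. A $t$-tuple is allowed if some test case covers it; $\mathcal T_a$ is the set of allowed $t$-tuples. A covering array $CA(N;t,S)$ is a list of $N$ test cases (repetitions allowed) covering every allowed $t$-tuple; $CAN(t,S)$ is the minimum $N$ for which a $CA(N;t,S)$ exists. $[N]=\{1,\dots,N\}$. A (weighted) Partial MaxSAT instance consists of hard constraints and soft clauses $(c,w)$ with positive integer weight $w$; its optimal cost is the minimum, over truth assignments satisfying all hard constraints, of the total weight of falsified soft clauses, and $\infty$ if the hard constraints are unsatisfiable. Variables: $x_{i,p,v}$ ($i\in[N]$, $p\in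 P$, $v\in d(p)$), $c^i_\tau$ ($i\in[N]$, $\tau\in\mathcal T_a$), $u_i$ ($i\in\{lb+2,\dots,N\}$). Hard constraints of $PMSat_{CX}^{N,t,S,lb}$: (X) for every $i\in[N]$, $p\in P$: exactly one of $\{x_{i,p,v}:v\in d(p)\}$ is true; (SUTX) for every $i\in[N]$: the formula obtained from $\varphi$ by replacing each atom $(p=v)$ with $x_{i,p,v}$; (CX) for every $i\in[N]$, $\tau\in\mathcal T_a$, $(p,v)\in\tau$: $c^i_\tau\rightarrow x_{i,p,v}$; (C) for every $\tau\in\mathcal T_a$: $\bigvee_{i\in[N]}c^i_\tau$; (BSU) for every $i\in\{lb+2,\dots,N-1\}$: $u_{i+1}\rightarrow u_i$; (CU) for every $i\in\{lb+2,\dots,N\}$, $\tau\in\mathcal T_a$: $c^i_\tau\rightarrow u_i$. Soft clauses: $(\neg u_i,1)$ for every $i\in\{lb+2,\dots,N\}$. *)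

theory Defs
  imports Main "HOL-Library.Extended_Nat"
begin

datatype 'a form =
    TT | FF | Atom 'a | Neg "'a form" | Conj "'a form" "'a form"
  | Disj "'a form" "'a form" | Imp "'a form" "'a form"

fun eval :: "('a \<Rightarrow> bool) \<Rightarrow> 'a form \<Rightarrow> bool" where
  "eval \<sigma> TT = True"
| "eval \<sigma> FF = False"
| "eval \<sigma> (Atom a) = \<sigma> a"
| "eval \<sigma> (Neg f) = (\<not> eval \<sigma> f)"
| "eval \<sigma> (Conj f g) = (eval \<sigma> f \<and> eval \<sigma> g)"
| "eval \<sigma> (Disj f g) = (eval \<sigma> f \<or> eval \<sigma> g)"
| "eval \<sigma> (Imp f g) = (eval \<sigma> f \<longrightarrow> eval \<sigma> g)"

fun atoms :: "'a form \<Rightarrow> 'a set" where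
  "atoms TT = {}"
| "atoms FF = {}"
| "atoms (Atom a) = {a}"
| "atoms (Neg f) = atoms f"
| "atoms (Conj f g) = atoms f \<union> atoms g"
| "atoms (Disj f g) = atoms f \<union> atoms g"
| "atoms (Imp f g) = atoms f \<union> atoms g"

definition test_case :: "'p set \<Rightarrow> ('p \<Rightarrow> 'v set) \<Rightarrow> ('p \<times> 'v) form \<Rightarrow> ('p \<Rightarrow> 'v) \<Rightarrow> bool" where
  "test_case P d \<phi> A \<longleftrightarrow> (\<forall>p\<in>P. A p \<in> d p) \<and> eval (\<lambda>(p, v). A p = v) \<phi>"

definition sut_model :: "'p set \<Rightarrow> ('p \<Rightarrow> 'v set) \<Rightarrow> ('p \<times> 'v) form \<Rightarrow> bool" where
  "sut_model P d \<phi> \<longleftrightarrow> finite P \<and> (\<forall>p\<in>P. finite (d p) \<and> d p \<noteq> {})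
     \<and> atoms \<phi> \<subseteq> Sigma P d \<and> (\<exists>A. test_case P d \<phi> A)"

text \<open>A t-tuple: an assignment of values (from the domains) to exactly t distinct
  parameters, viewed as a set of pairs.\<close>
definition t_tuples :: "'p set \<Rightarrow> ('p \<Rightarrow> 'v set) \<Rightarrow> nat \<Rightarrow> ('p \<times> 'v) set set" where
  "t_tuples P d t = {\<tau>. \<tau> \<subseteq> Sigma P d \<and> finite \<tau> \<and> card \<tau> = t \<and> inj_on fst \<tau>}"

definition covers :: "('p \<Rightarrow> 'v) \<Rightarrow> ('p \<times> 'v) set \<Rightarrow> bool" where
  "covers A \<tau> \<longleftrightarrow> (\<forall>(p, v)\<in>\<tau>. A p = v)"

definition allowed_tuples :: "'p set \<Rightarrow> ('p \<Rightarrow> 'v set) \<Rightarrow> ('p \<times> 'v) form \<Rightarrow> nat \<Rightarrow> ('p \<times> 'v) set set" where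
  "allowed_tuples P d \<phi> t = {\<tau> \<in> t_tuples P d t. \<exists>A. test_case P d \<phi> A \<and> covers A \<tau>}"

definition is_CA :: "'p set \<Rightarrow> ('p \<Rightarrow> 'v set) \<Rightarrow> ('p \<times> 'v) form \<Rightarrow> nat \<Rightarrow> nat \<Rightarrow> ('p \<Rightarrow> 'v) list \<Rightarrow> bool" where
  "is_CA P d \<phi> t N L \<longleftrightarrow> length L = N \<and> (\<forall>A\<in>set L. test_case P d \<phi> A)
     \<and> (\<forall>\<tau>\<in>allowed_tuples P d \<phi> t. \<exists>A\<in>set L. covers A \<tau>)"

definition CAN :: "'p set \<Rightarrow> ('p \<Rightarrow> 'v set) \<Rightarrow> ('p \<times> 'v) form \<Rightarrow> nat \<Rightarrow> nat" where
  "CAN P d \<phi> t = (LEAST N. \<exists>L. is_CA P d \<phi> t N L)"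

text \<open>Hard constraints are given semantically (as predicates on truth assignments);
  soft clauses as formulas with positive weights. The optimal cost is the infimum
  (in enat) of the cost over all assignments satisfying every hard constraint;
  the infimum of the empty set is infinity.\<close>

definition soft_cost :: "('x \<Rightarrow> bool) \<Rightarrow> ('x form \<times> nat) list \<Rightarrow> nat" where
  "soft_cost \<sigma> S = (\<Sum>(c, w)\<leftarrow>S. if eval \<sigma> c then 0 else w)"

definition opt_cost :: "(('x \<Rightarrow> bool) \<Rightarrow> bool) set \<Rightarrow> ('x form \<times> nat) list \<Rightarrow> enat" where
  "opt_cost H S = (INF \<sigma> \<in> {\<sigma>. \<forall>h\<in>H. h \<sigma>}. enat (soft_cost \<sigma> S))"

datatype ('p, 'v) var = X nat 'p 'v | C nat "('p \<times> 'v) set" | U nat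

definition hard_CX :: "'p set \<Rightarrow> ('p \<Rightarrow> 'v set) \<Rightarrow> ('p \<times> 'v) form \<Rightarrow> nat \<Rightarrow> nat \<Rightarrow> nat
    \<Rightarrow> ((('p, 'v) var \<Rightarrow> bool) \<Rightarrow> bool) set" where
  "hard_CX P d \<phi> t N lb =
     \<comment> \<open>(X)\<close>
     {(\<lambda>\<sigma>. \<exists>!v. v \<in> d p \<and> \<sigma> (X i p v)) | i p. i \<in> {1..N} \<and> p \<in> P}
   \<union> \<comment> \<open>(SUTX)\<close>
     {(\<lambda>\<sigma>. eval \<sigma> (map_form (\<lambda>(p, v). X i p v) \<phi>)) | i. i \<in> {1..N}}
   \<union> \<comment> \<open>(CX)\<close>
     {(\<lambda>\<sigma>. \<sigma> (C i \<tau>) \<longrightarrow> \<sigma> (X i p v)) | i \<tau> p v.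
        i \<in> {1..N} \<and> \<tau> \<in> allowed_tuples P d \<phi> t \<and> (p, v) \<in> \<tau>}
   \<union> \<comment> \<open>(C)\<close>
     {(\<lambda>\<sigma>. \<exists>i\<in>{1..N}. \<sigma> (C i \<tau>)) | \<tau>. \<tau> \<in> allowed_tuples P d \<phi> t}
   \<union> \<comment> \<open>(BSU)\<close>
     {(\<lambda>\<sigma>. \<sigma> (U (i + 1)) \<longrightarrow> \<sigma> (U i)) | i. lb + 2 \<le> i \<and> i + 1 \<le> N}
   \<union> \<comment> \<open>(CU)\<close>
     {(\<lambda>\<sigma>. \<sigma> (C i \<tau>) \<longrightarrow> \<sigma> (U i)) | i \<tau>.
        i \<in> {lb + 2..N} \<and> \<tau> \<in> allowed_tuples P d \<phi> t}"

definition soft_CX :: "nat \<Rightarrow> nat \<Rightarrow> (('p, 'v) var form \<times> nat) list" where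
  "soft_CX N lb = map (\<lambda>i. (Neg (Atom (U i)), 1)) [lb + 2..<N + 1]"

end

theory Submission
  imports Defs
begin

lemma eval_map: "eval \<sigma> (map_form f \<phi>) = eval (\<sigma> \<circ> f) \<phi>"
  by (induction \<phi>) auto

lemma eval_cong: "(\<And>a. a \<in> atoms \<phi> \<Longrightarrow> \<sigma> a = \<sigma>' a) \<Longrightarrow> eval \<sigma> \<phi> = eval \<sigma>' \<phi>"
  by (induction \<phi>) auto

lemma hard_iff:
  "(\<forall>h\<in>hard_CX P d \<phi> t N lb. h \<sigma>) \<longleftrightarrow>
   (\<forall>i\<in>{1..N}. \<forall>p\<in>P. \<exists>!v. v \<in> d p \<and> \<sigma> (X i p v)) \<and>
   (\<forall>i\<in>{1..N}. eval \<sigma> (map_form (\<lambda>(p, v). X i p v) \<phi>)) \<and>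
   (\<forall>i\<in>{1..N}. \<forall>\<tau>\<in>allowed_tuples P d \<phi> t. \<forall>(p,v)\<in>\<tau>. \<sigma> (C i \<tau>) \<longrightarrow> \<sigma> (X i p v)) \<and>
   (\<forall>\<tau>\<in>allowed_tuples P d \<phi> t. \<exists>i\<in>{1..N}. \<sigma> (C i \<tau>)) \<and>
   (\<forall>i. lb + 2 \<le> i \<and> i + 1 \<le> N \<longrightarrow> \<sigma> (U (i + 1)) \<longrightarrow> \<sigma> (U i)) \<and>
   (\<forall>i\<in>{lb+2..N}. \<forall>\<tau>\<in>allowed_tuples P d \<phi> t. \<sigma> (C i \<tau>) \<longrightarrow> \<sigma> (U i))" (is "?L \<longleftrightarrow> ?R")
  proof
  assume H: "\<forall>h\<in>hard_CX P d \<phi> t N lb. h \<sigma>"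
  show "?R"
  proof (intro conjI)
    show "\<forall>i\<in>{1..N}. \<forall>p\<in>P. \<exists>!v. v \<in> d p \<and> \<sigma> (X i p v)"
    proof (intro ballI)
      fix i p assume "i \<in> {1..N}" "p \<in> P"
      then show "\<exists>!v. v \<in> d p \<and> \<sigma> (X i p v)"
        using H[rule_format, of "\<lambda>\<sigma>. \<exists>!v. v \<in> d p \<and> \<sigma> (X i p v)"]
        unfolding hard_CX_def by blast
    qed
    show "\<forall>i\<in>{1..N}. eval \<sigma> (map_form (\<lambda>(p, v). X i p v) \<phi>)"
    proof (intro ballI)
      fix i assume "i \<in> {1..N}"
      then show "eval \<sigma> (map_form (\<lambda>(p, v). X i p v) \<phi>)"
        using H[rule_format, of "\<lambda>\<sigma>. eval \<sigma> (map_form (\<lambda>(p, v). X i p v) \<phi>)"]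
        unfolding hard_CX_def by blast
    qed
    show "\<forall>i\<in>{1..N}. \<forall>\<tau>\<in>allowed_tuples P d \<phi> t. \<forall>(p,v)\<in>\<tau>. \<sigma> (C i \<tau>) \<longrightarrow> \<sigma> (X i p v)"
    proof (intro ballI, clarify)
      fix i \<tau> p v assume "i \<in> {1..N}" "\<tau> \<in> allowed_tuples P d \<phi> t" "(p,v) \<in> \<tau>" "\<sigma> (C i \<tau>)"
      then show "\<sigma> (X i p v)"
        using H[rule_format, of "\<lambda>\<sigma>. \<sigma> (C i \<tau>) \<longrightarrow> \<sigma> (X i p v)"]
        unfolding hard_CX_def by blast
    qed
    show "\<forall>\<tau>\<in>allowed_tuples P d \<phi> t. \<exists>i\<in>{1..N}. \<sigma> (C i \<tau>)"
    proof (intro ballI)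
      fix \<tau> assume "\<tau> \<in> allowed_tuples P d \<phi> t"
      then show "\<exists>i\<in>{1..N}. \<sigma> (C i \<tau>)"
        using H[rule_format, of "\<lambda>\<sigma>. \<exists>i\<in>{1..N}. \<sigma> (C i \<tau>)"]
        unfolding hard_CX_def by blast
    qed
    show "\<forall>i. lb + 2 \<le> i \<and> i + 1 \<le> N \<longrightarrow> \<sigma> (U (i + 1)) \<longrightarrow> \<sigma> (U i)"
    proof (intro allI impI)
      fix i assume "lb + 2 \<le> i \<and> i + 1 \<le> N" "\<sigma> (U (i + 1))"
      then show "\<sigma> (U i)"
        using H[rule_format, of "\<lambda>\<sigma>. \<sigma> (U (i + 1)) \<longrightarrow> \<sigma> (U i)"]
        unfolding hard_CX_def by blast
    qed
    show "\<forall>i\<in>{lb+2..N}. \<forall>\<tau>\<in>allowed_tuples P d \<phi> t. \<sigma> (C i \<tau>) \<longrightarrow> \<sigma> (U i)"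
    proof (intro ballI impI)
      fix i \<tau> assume "i \<in> {lb+2..N}" "\<tau> \<in> allowed_tuples P d \<phi> t" "\<sigma> (C i \<tau>)"
      then show "\<sigma> (U i)"
        using H[rule_format, of "\<lambda>\<sigma>. \<sigma> (C i \<tau>) \<longrightarrow> \<sigma> (U i)"]
        unfolding hard_CX_def by blast
    qed
  qed
next
  assume R: "?R"
  note R1 = conjunct1[OF R]
  note R2 = conjunct1[OF conjunct2[OF R]]
  note R3 = conjunct1[OF conjunct2[OF conjunct2[OF R]]]
  note R4 = conjunct1[OF conjunct2[OF conjunct2[OF conjunct2[OF R]]]]
  note R5 = conjunct1[OF conjunct2[OF conjunct2[OF conjunct2[OF conjunct2[OF R]]]]]
  note R6 = conjunct2[OF conjunct2[OF conjunct2[OF conjunct2[OF conjunct2[OF R]]]]]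
  show "\<forall>h\<in>hard_CX P d \<phi> t N lb. h \<sigma>"
    unfolding hard_CX_def
  proof (intro ballI)
    fix h assume "h \<in> {(\<lambda>\<sigma>. \<exists>!v. v \<in> d p \<and> \<sigma> (X i p v)) | i p. i \<in> {1..N} \<and> p \<in> P}
   \<union> {(\<lambda>\<sigma>. eval \<sigma> (map_form (\<lambda>(p, v). X i p v) \<phi>)) | i. i \<in> {1..N}}
   \<union> {(\<lambda>\<sigma>. \<sigma> (C i \<tau>) \<longrightarrow> \<sigma> (X i p v)) | i \<tau> p v.
        i \<in> {1..N} \<and> \<tau> \<in> allowed_tuples P d \<phi> t \<and> (p, v) \<in> \<tau>}
   \<union> {(\<lambda>\<sigma>. \<exists>i\<in>{1..N}. \<sigma> (C i \<tau>)) | \<tau>. \<tau> \<in> allowed_tuples P d \<phi> t}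
   \<union> {(\<lambda>\<sigma>. \<sigma> (U (i + 1)) \<longrightarrow> \<sigma> (U i)) | i. lb + 2 \<le> i \<and> i + 1 \<le> N}
   \<union> {(\<lambda>\<sigma>. \<sigma> (C i \<tau>) \<longrightarrow> \<sigma> (U i)) | i \<tau>.
        i \<in> {lb + 2..N} \<and> \<tau> \<in> allowed_tuples P d \<phi> t}"
    then show "h \<sigma>"
    proof (elim UnE)
      assume "h \<in> {(\<lambda>\<sigma>. \<exists>!v. v \<in> d p \<and> \<sigma> (X i p v)) | i p. i \<in> {1..N} \<and> p \<in> P}"
      then obtain i p where "h = (\<lambda>\<sigma>. \<exists>!v. v \<in> d p \<and> \<sigma> (X i p v))" "i \<in> {1..N}" "p \<in> P" by blast
      then show ?thesis using R1 by simp
    next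
      assume "h \<in> {(\<lambda>\<sigma>. eval \<sigma> (map_form (\<lambda>(p, v). X i p v) \<phi>)) | i. i \<in> {1..N}}"
      then obtain i where "h = (\<lambda>\<sigma>. eval \<sigma> (map_form (\<lambda>(p, v). X i p v) \<phi>))" "i \<in> {1..N}" by blast
      then show ?thesis using R2 by simp
    next
      assume "h \<in> {(\<lambda>\<sigma>. \<sigma> (C i \<tau>) \<longrightarrow> \<sigma> (X i p v)) | i \<tau> p v.
        i \<in> {1..N} \<and> \<tau> \<in> allowed_tuples P d \<phi> t \<and> (p, v) \<in> \<tau>}"
      then obtain i \<tau> p v where "h = (\<lambda>\<sigma>. \<sigma> (C i \<tau>) \<longrightarrow> \<sigma> (X i p v))" "i \<in> {1..N}" "\<tau> \<in> allowed_tuples P d \<phi> t" "(p, v) \<in> \<tau>" by blast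
      then show ?thesis using R3 by fastforce
    next
      assume "h \<in> {(\<lambda>\<sigma>. \<exists>i\<in>{1..N}. \<sigma> (C i \<tau>)) | \<tau>. \<tau> \<in> allowed_tuples P d \<phi> t}"
      then obtain \<tau> where "h = (\<lambda>\<sigma>. \<exists>i\<in>{1..N}. \<sigma> (C i \<tau>))" "\<tau> \<in> allowed_tuples P d \<phi> t" by blast
      then show ?thesis using R4 by simp
    next
      assume "h \<in> {(\<lambda>\<sigma>. \<sigma> (U (i + 1)) \<longrightarrow> \<sigma> (U i)) | i. lb + 2 \<le> i \<and> i + 1 \<le> N}"
      then obtain i where "h = (\<lambda>\<sigma>. \<sigma> (U (i + 1)) \<longrightarrow> \<sigma> (U i))" "lb + 2 \<le> i" "i + 1 \<le> N" by blast
      then show ?thesis using R5 by simp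
    next
      assume "h \<in> {(\<lambda>\<sigma>. \<sigma> (C i \<tau>) \<longrightarrow> \<sigma> (U i)) | i \<tau>.
        i \<in> {lb + 2..N} \<and> \<tau> \<in> allowed_tuples P d \<phi> t}"
      then obtain i \<tau> where "h = (\<lambda>\<sigma>. \<sigma> (C i \<tau>) \<longrightarrow> \<sigma> (U i))" "i \<in> {lb + 2..N}" "\<tau> \<in> allowed_tuples P d \<phi> t" by blast
      then show ?thesis using R6 by blast
    qed
  qed
qed

lemma cost_eq:
  "soft_cost \<sigma> (soft_CX N lb) = card {i \<in> {lb+2..N}. \<sigma> (U i)}"
proof -
  have "soft_cost \<sigma> (soft_CX N lb) = (\<Sum>i\<leftarrow>[lb + 2..<N + 1]. if \<sigma> (U i) then 1 else 0)"
    unfolding soft_cost_def soft_CX_def map_map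
    by (intro arg_cong[where f=sum_list] map_cong) auto
  also have "\<dots> = (\<Sum>i\<in>{lb+2..<N+1}. if \<sigma> (U i) then 1 else 0)"
    by (subst sum_list_distinct_conv_sum_set) (simp_all only: distinct_upt set_upt)
  also have "\<dots> = card {i \<in> {lb+2..N}. \<sigma> (U i)}"
  proof -
    have e: "{lb+2..<N+1} = {lb+2..N}" by auto
    have "(\<Sum>i\<in>{lb+2..N}. (if \<sigma> (U i) then 1 else 0)::nat) = card ({lb+2..N} \<inter> {i. \<sigma> (U i)})"
      by (simp add: sum.If_cases)
    also have "{lb+2..N} \<inter> {i. \<sigma> (U i)} = {i \<in> {lb+2..N}. \<sigma> (U i)}" by blast
    finally show ?thesis unfolding e .
  qed
  finally show ?thesis .
qed

lemma hard_parts: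
  assumes H: "\<forall>h\<in>hard_CX P d \<phi> t N lb. h \<sigma>"
  shows "\<forall>i\<in>{1..N}. \<forall>p\<in>P. \<exists>!v. v \<in> d p \<and> \<sigma> (X i p v)"
   "\<forall>i\<in>{1..N}. eval \<sigma> (map_form (\<lambda>(p, v). X i p v) \<phi>)"
   "\<forall>i\<in>{1..N}. \<forall>\<tau>\<in>allowed_tuples P d \<phi> t. \<forall>(p,v)\<in>\<tau>. \<sigma> (C i \<tau>) \<longrightarrow> \<sigma> (X i p v)"
   "\<forall>\<tau>\<in>allowed_tuples P d \<phi> t. \<exists>i\<in>{1..N}. \<sigma> (C i \<tau>)"
   "\<forall>i. lb + 2 \<le> i \<and> i + 1 \<le> N \<longrightarrow> \<sigma> (U (i + 1)) \<longrightarrow> \<sigma> (U i)"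
   "\<forall>i\<in>{lb+2..N}. \<forall>\<tau>\<in>allowed_tuples P d \<phi> t. \<sigma> (C i \<tau>) \<longrightarrow> \<sigma> (U i)"
proof -
  note R = H[unfolded hard_iff]
  show "\<forall>i\<in>{1..N}. \<forall>p\<in>P. \<exists>!v. v \<in> d p \<and> \<sigma> (X i p v)" using conjunct1[OF R] .
  show "\<forall>i\<in>{1..N}. eval \<sigma> (map_form (\<lambda>(p, v). X i p v) \<phi>)" using conjunct1[OF conjunct2[OF R]] .
  show "\<forall>i\<in>{1..N}. \<forall>\<tau>\<in>allowed_tuples P d \<phi> t. \<forall>(p,v)\<in>\<tau>. \<sigma> (C i \<tau>) \<longrightarrow> \<sigma> (X i p v)"
    using conjunct1[OF conjunct2[OF conjunct2[OF R]]] .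
  show "\<forall>\<tau>\<in>allowed_tuples P d \<phi> t. \<exists>i\<in>{1..N}. \<sigma> (C i \<tau>)"
    using conjunct1[OF conjunct2[OF conjunct2[OF conjunct2[OF R]]]] .
  show "\<forall>i. lb + 2 \<le> i \<and> i + 1 \<le> N \<longrightarrow> \<sigma> (U (i + 1)) \<longrightarrow> \<sigma> (U i)"
    using conjunct1[OF conjunct2[OF conjunct2[OF conjunct2[OF conjunct2[OF R]]]]] .
  show "\<forall>i\<in>{lb+2..N}. \<forall>\<tau>\<in>allowed_tuples P d \<phi> t. \<sigma> (C i \<tau>) \<longrightarrow> \<sigma> (U i)"
    using conjunct2[OF conjunct2[OF conjunct2[OF conjunct2[OF conjunct2[OF R]]]]] .
qed

lemma allowed_sub: "\<tau> \<in> allowed_tuples P d \<phi> t \<Longrightarrow> \<tau> \<subseteq> Sigma P d"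
  unfolding allowed_tuples_def t_tuples_def by blast

lemma lower:
  assumes sm: "sut_model P d \<phi>" and H: "\<forall>h\<in>hard_CX P d \<phi> t N lb. h \<sigma>"
  defines "R \<equiv> {i\<in>{1..N}. i \<le> lb+1 \<or> \<sigma> (U i)}"
  shows "CAN P d \<phi> t \<le> card R" "card R \<le> N"
    "card R \<le> lb + 1 + card {i \<in> {lb+2..N}. \<sigma> (U i)}"
proof -
  note R1 = hard_parts(1)[OF H, rule_format] and R2 = hard_parts(2)[OF H, rule_format]
    and R3 = hard_parts(3)[OF H, rule_format]
    and R4 = hard_parts(4)[OF H, rule_format] and R6 = hard_parts(6)[OF H, rule_format]
  define A where "A i p = (THE v. v \<in> d p \<and> \<sigma> (X i p v))" for i p
  have Aeq: "(A i p = v) = \<sigma> (X i p v)" if "i\<in>{1..N}" "p\<in>P" "v\<in>d p" for i p v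
  proof -
    have u: "\<exists>!v. v \<in> d p \<and> \<sigma> (X i p v)" using R1[OF that(1,2)] .
    show ?thesis
    proof
      assume "A i p = v"
      then show "\<sigma> (X i p v)" using theI'[OF u] unfolding A_def by simp
    next
      assume "\<sigma> (X i p v)"
      then show "A i p = v" unfolding A_def using the1_equality[OF u] that(3) by simp
    qed
  qed
  have Ad: "A i p \<in> d p" if "i\<in>{1..N}" "p\<in>P" for i p
  proof -
    have u: "\<exists>!v. v \<in> d p \<and> \<sigma> (X i p v)" using R1[OF that(1,2)] .
    show ?thesis unfolding A_def using theI'[OF u] by simp
  qed
  have atm: "atoms \<phi> \<subseteq> Sigma P d" using sm unfolding sut_model_def by simp
  have tc: "test_case P d \<phi> (A i)" if i: "i\<in>{1..N}" for i
  proof -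
    have "eval (\<lambda>(p, v). A i p = v) \<phi> = eval (\<lambda>(p, v). \<sigma> (X i p v)) \<phi>"
    proof (rule eval_cong)
      fix a assume "a \<in> atoms \<phi>"
      then have "a \<in> Sigma P d" using atm by (rule subsetD[rotated])
      then obtain p v where a: "a = (p, v)" "p \<in> P" "v \<in> d p" by (cases a) simp
      show "(case a of (p, v) \<Rightarrow> A i p = v) = (case a of (p, v) \<Rightarrow> \<sigma> (X i p v))"
        using Aeq[OF i a(2,3)] a(1) by simp
    qed
    also have "\<dots> = eval \<sigma> (map_form (\<lambda>(p, v). X i p v) \<phi>)"
      by (simp add: eval_map o_def case_prod_beta')
    finally have "eval (\<lambda>(p, v). A i p = v) \<phi>" using R2[OF i] by simp
    moreover have "\<forall>p\<in>P. A i p \<in> d p" using Ad[OF i] by simp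
    ultimately show ?thesis unfolding test_case_def by simp
  qed
  have cov: "\<exists>i\<in>R. covers (A i) \<tau>" if tau: "\<tau> \<in> allowed_tuples P d \<phi> t" for \<tau>
  proof -
    obtain i where i: "i \<in> {1..N}" "\<sigma> (C i \<tau>)" using R4[OF tau] by auto
    have "i \<in> R"
    proof (cases "i \<le> lb + 1")
      case True then show ?thesis using i unfolding R_def by simp
    next
      case False then have "i \<in> {lb+2..N}" using i by auto
      then have "\<sigma> (U i)" using R6 tau i(2) by simp
      then show ?thesis using i unfolding R_def by simp
    qed
    moreover have "covers (A i) \<tau>"
      unfolding covers_def
    proof (clarify)
      fix p v assume pv: "(p, v) \<in> \<tau>"
      then have pv': "p \<in> P" "v \<in> d p" using allowed_sub[OF tau] by auto
      have "\<sigma> (X i p v)" using R3[OF i(1) tau pv] i(2) by simp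
      then show "A i p = v" using Aeq[OF i(1) pv'] by simp
    qed
    ultimately show ?thesis by auto
  qed
  have fR: "finite R" unfolding R_def by simp
  have RN: "R \<subseteq> {1..N}" unfolding R_def by auto
  define L where "L = map A (sorted_list_of_set R)"
  have "length L = card R" unfolding L_def by simp
  moreover have "\<forall>B\<in>set L. test_case P d \<phi> B" unfolding L_def using fR RN tc by auto
  moreover have "\<forall>\<tau>\<in>allowed_tuples P d \<phi> t. \<exists>B\<in>set L. covers B \<tau>"
    unfolding L_def using fR cov by auto
  ultimately have "is_CA P d \<phi> t (card R) L" unfolding is_CA_def by simp
  then show "CAN P d \<phi> t \<le> card R" unfolding CAN_def by (rule Least_le[where P="\<lambda>N. \<exists>L. is_CA P d \<phi> t N L", OF exI])
  have "card R \<le> card {1..N}" using RN by (intro card_mono) auto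
  then show "card R \<le> N" by simp
  have "R \<subseteq> {1..lb+1} \<union> {i \<in> {lb+2..N}. \<sigma> (U i)}" unfolding R_def by auto
  then have "card R \<le> card ({1..lb+1} \<union> {i \<in> {lb+2..N}. \<sigma> (U i)})" by (intro card_mono) auto
  also have "\<dots> \<le> card {1..lb+1} + card {i \<in> {lb+2..N}. \<sigma> (U i)}" by (rule card_Un_le)
  finally show "card R \<le> lb + 1 + card {i \<in> {lb+2..N}. \<sigma> (U i)}" by simp
qed

lemma ca_exists:
  assumes sm: "sut_model P d \<phi>"
  shows "\<exists>K L. is_CA P d \<phi> t K L"
proof -
  have "finite (Sigma P d)" using sm unfolding sut_model_def by (intro finite_SigmaI) auto
  then have "finite (Pow (Sigma P d))" by simp
  moreover have "allowed_tuples P d \<phi> t \<subseteq> Pow (Sigma P d)" using allowed_sub by blast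
  ultimately have "finite (allowed_tuples P d \<phi> t)" by (rule finite_subset[rotated])
  then obtain xs where xs: "set xs = allowed_tuples P d \<phi> t" using finite_list by blast
  define f where "f \<tau> = (SOME A. test_case P d \<phi> A \<and> covers A \<tau>)" for \<tau>
  have f: "test_case P d \<phi> (f \<tau>) \<and> covers (f \<tau>) \<tau>" if "\<tau> \<in> allowed_tuples P d \<phi> t" for \<tau>
  proof -
    have "\<exists>A. test_case P d \<phi> A \<and> covers A \<tau>" using that unfolding allowed_tuples_def by simp
    then show ?thesis unfolding f_def by (rule someI_ex)
  qed
  have "is_CA P d \<phi> t (length (map f xs)) (map f xs)"
    unfolding is_CA_def using f xs by auto
  then show ?thesis by blast
qed

lemma upper:
  assumes sm: "sut_model P d \<phi>" and KN: "CAN P d \<phi> t \<le> N" and K1: "1 \<le> CAN P d \<phi> t"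
  shows "\<exists>\<sigma>. (\<forall>h\<in>hard_CX P d \<phi> t N lb. h \<sigma>) \<and>
           soft_cost \<sigma> (soft_CX N lb) = CAN P d \<phi> t - (lb + 1)"
proof -
  define K where "K = CAN P d \<phi> t"
  obtain K0 L0 where "is_CA P d \<phi> t K0 L0" using ca_exists[OF sm, of t] by blast
  then have "\<exists>L. is_CA P d \<phi> t K L" unfolding K_def CAN_def
    by (intro LeastI[where P="\<lambda>N. \<exists>L. is_CA P d \<phi> t N L"]) blast
  then obtain L where L: "is_CA P d \<phi> t K L" by blast
  have lenL: "length L = K" and tcL: "\<forall>A\<in>set L. test_case P d \<phi> A"
    and covL: "\<forall>\<tau>\<in>allowed_tuples P d \<phi> t. \<exists>A\<in>set L. covers A \<tau>"
    using L unfolding is_CA_def by auto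
  have K1': "1 \<le> K" and KN': "K \<le> N" using K1 KN unfolding K_def by auto
  define Ai where "Ai i = L ! (if i \<le> K then i - 1 else 0)" for i
  have AiL: "Ai i \<in> set L" if "1 \<le> i" for i
  proof -
    have "(if i \<le> K then i - 1 else 0) < length L" using that K1' lenL by auto
    then show ?thesis unfolding Ai_def by (rule nth_mem)
  qed
  have Aitc: "test_case P d \<phi> (Ai i)" if "1 \<le> i" for i using tcL AiL[OF that] by blast
  define \<sigma> where "\<sigma> x = (case x of X i p v \<Rightarrow> Ai i p = v
       | C i \<tau> \<Rightarrow> i \<le> K \<and> covers (Ai i) \<tau> | U i \<Rightarrow> i \<le> K)" for x
  have hard: "\<forall>h\<in>hard_CX P d \<phi> t N lb. h \<sigma>"
    unfolding hard_iff
  proof (intro conjI)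
    show "\<forall>i\<in>{1..N}. \<forall>p\<in>P. \<exists>!v. v \<in> d p \<and> \<sigma> (X i p v)"
    proof (intro ballI)
      fix i p assume i: "i \<in> {1..N}" and p: "p \<in> P"
      have "Ai i p \<in> d p" using Aitc[of i] i p unfolding test_case_def by auto
      then show "\<exists>!v. v \<in> d p \<and> \<sigma> (X i p v)" unfolding \<sigma>_def by auto
    qed
    show "\<forall>i\<in>{1..N}. eval \<sigma> (map_form (\<lambda>(p, v). X i p v) \<phi>)"
    proof (intro ballI)
      fix i assume i: "i \<in> {1..N}"
      have "eval (\<lambda>(p, v). Ai i p = v) \<phi>" using Aitc[of i] i unfolding test_case_def by auto
      moreover have "\<sigma> \<circ> (\<lambda>(p, v). X i p v) = (\<lambda>(p, v). Ai i p = v)"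
        unfolding \<sigma>_def by (auto simp: fun_eq_iff)
      ultimately show "eval \<sigma> (map_form (\<lambda>(p, v). X i p v) \<phi>)" by (simp add: eval_map)
    qed
    show "\<forall>i\<in>{1..N}. \<forall>\<tau>\<in>allowed_tuples P d \<phi> t. \<forall>(p,v)\<in>\<tau>. \<sigma> (C i \<tau>) \<longrightarrow> \<sigma> (X i p v)"
      unfolding \<sigma>_def covers_def by auto
    show "\<forall>\<tau>\<in>allowed_tuples P d \<phi> t. \<exists>i\<in>{1..N}. \<sigma> (C i \<tau>)"
    proof
      fix \<tau> assume tau: "\<tau> \<in> allowed_tuples P d \<phi> t"
      then obtain B where B: "B \<in> set L" "covers B \<tau>" using covL by blast
      then obtain j where j: "j < K" "B = L ! j" using lenL by (auto simp: in_set_conv_nth)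
      have "Ai (j+1) = B" unfolding Ai_def using j by simp
      moreover have "j + 1 \<in> {1..N}" using j KN' by auto
      ultimately show "\<exists>i\<in>{1..N}. \<sigma> (C i \<tau>)" using B j unfolding \<sigma>_def
        by (intro bexI[of _ "j+1"]) auto
    qed
    show "\<forall>i. lb + 2 \<le> i \<and> i + 1 \<le> N \<longrightarrow> \<sigma> (U (i + 1)) \<longrightarrow> \<sigma> (U i)"
      unfolding \<sigma>_def by auto
    show "\<forall>i\<in>{lb+2..N}. \<forall>\<tau>\<in>allowed_tuples P d \<phi> t. \<sigma> (C i \<tau>) \<longrightarrow> \<sigma> (U i)"
      unfolding \<sigma>_def by auto
  qed
  have "{i \<in> {lb+2..N}. \<sigma> (U i)} = {lb+2..K}" unfolding \<sigma>_def using KN' by auto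
  then have "soft_cost \<sigma> (soft_CX N lb) = K - (lb + 1)" unfolding cost_eq by simp
  then show ?thesis using hard unfolding K_def by blast
qed

theorem proposition3:
  fixes P :: "'p set" and d :: "'p \<Rightarrow> 'v set" and \<phi> :: "('p \<times> 'v) form"
    and t N lb :: nat
  assumes "sut_model P d \<phi>"
    and "1 \<le> t" and "t \<le> card P"
    and "1 \<le> N"
    and "lb < CAN P d \<phi> t"
  shows "opt_cost (hard_CX P d \<phi> t N lb) (soft_CX N lb) =
           (if CAN P d \<phi> t \<le> N then enat (CAN P d \<phi> t - (lb + 1)) else \<infinity>)"
proof -
  define F where "F = {\<sigma>. \<forall>h\<in>hard_CX P d \<phi> t N lb. h \<sigma>}"
  have oc: "opt_cost (hard_CX P d \<phi> t N lb) (soft_CX N lb) =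
     (INF \<sigma> \<in> F. enat (soft_cost \<sigma> (soft_CX N lb)))" unfolding opt_cost_def F_def ..
  have lowF: "CAN P d \<phi> t \<le> N \<and> CAN P d \<phi> t - (lb + 1) \<le> soft_cost \<sigma> (soft_CX N lb)"
    if "\<sigma> \<in> F" for \<sigma>
  proof -
    have H: "\<forall>h\<in>hard_CX P d \<phi> t N lb. h \<sigma>" using that unfolding F_def by simp
    note l = lower[OF assms(1) H]
    show ?thesis using l unfolding cost_eq by linarith
  qed
  show ?thesis
  proof (cases "CAN P d \<phi> t \<le> N")
    case True
    obtain \<sigma>0 where s0: "\<sigma>0 \<in> F" "soft_cost \<sigma>0 (soft_CX N lb) = CAN P d \<phi> t - (lb + 1)"
    proof -
      have "1 \<le> CAN P d \<phi> t" using assms(5) by simp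
      from upper[OF assms(1) True this, of lb] obtain \<sigma> where
        "\<forall>h\<in>hard_CX P d \<phi> t N lb. h \<sigma>" "soft_cost \<sigma> (soft_CX N lb) = CAN P d \<phi> t - (lb + 1)"
        by blast
      then show ?thesis using that unfolding F_def by simp
    qed
    have "(INF \<sigma> \<in> F. enat (soft_cost \<sigma> (soft_CX N lb))) = enat (CAN P d \<phi> t - (lb + 1))"
    proof (rule antisym)
      show "(INF \<sigma> \<in> F. enat (soft_cost \<sigma> (soft_CX N lb))) \<le> enat (CAN P d \<phi> t - (lb + 1))"
        using INF_lower[OF s0(1), of "\<lambda>\<sigma>. enat (soft_cost \<sigma> (soft_CX N lb))"] s0(2) by simp
      show "enat (CAN P d \<phi> t - (lb + 1)) \<le> (INF \<sigma> \<in> F. enat (soft_cost \<sigma> (soft_CX N lb)))"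
        by (rule INF_greatest) (use lowF in simp)
    qed
    then show ?thesis using True oc by simp
  next
    case False
    then have "F = {}" using lowF by (meson ex_in_conv)
    then show ?thesis using False oc by (simp add: top_enat_def)
  qed
qed

end
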